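(* Let $d\in\mathbb{N}$, and suppose that there exists $\tau^*>0$ such that $f\in\mathcal{F}_d$ is continuous on $\mathbb{R}^d$ and differentiable at every $x\in\mathbb{R}^d$ satisfying $f(x)<\tau^*$. Then for $\beta\geq1$, $\Lambda>0$ and any $\tau\leq\tau^*\det^{1/2}\Sigma_f$, we have $f\in\mathcal{F}^{(\beta,\Lambda,\tau)}$ if and only if \[ \|\nabla f(x)\|'_{\Sigma_f^{-1}}\leq\Lambda\{f(x)\det^{1/2}\Sigma_f\}^{1-1/\beta} \] for all $x\in\mathbb{R}^d$ with $f(x)<\tau\det^{-1/2}\Sigma_f$.
   Context: $\mathcal{F}_d$ is the class of upper semi-continuous log-concave densities on $\mathbb{R}^d$; $\Sigma_f$ is the covariance matrix of $f\in\mathcal{F}_d$. For a positive definite $S$, $\|x\|_S:=(x^\top S^{-1}x)^{1/2}$ and $\|w\|'_S:=(w^\top S^{-1}w)^{1/2}\det^{-1/2}S$ (so $\|w\|'_{\Sigma^{-1}}=(w^\top\Sigma w)^{1/2}\det^{1/2}\Sigma$). For $\beta\ge1$ and $\Lambda,\tau>0$, $\mathcal{F}^{(\beta,\Lambda,\tau)}$ is the set of $f\in\mathcal{F}_d$ that are continuous on $\mathbb{R}^d$ and satisfy $\|x-y\|_{\Sigma_f}\geq \dfrac{\{f(x)-f(y)\}\det^{1/2}\Sigma_f}{\Lambda\{f(x)\det^{1/2}\Sigma_f\}^{1-1/\beta}}$ whenever $f(y)<f(x)<\tau\det^{-1/2}\Sigma_f$. *)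

theory Defs
  imports "HOL-Analysis.Analysis"
begin

definition usc_on_UNIV :: "('a::topological_space \<Rightarrow> real) \<Rightarrow> bool" where
  "usc_on_UNIV f \<longleftrightarrow> (\<forall>x. \<forall>c. f x < c \<longrightarrow> (\<forall>\<^sub>F y in at x. f y < c))"

text \<open>Log-concavity: f is nonnegative and log f (with log 0 = -infinity) is concave.\<close>
definition log_concave :: "(real^'n \<Rightarrow> real) \<Rightarrow> bool" where
  "log_concave f \<longleftrightarrow> (\<forall>x. 0 \<le> f x) \<and>
     (\<forall>x y t. 0 < t \<and> t < 1 \<longrightarrow>
        f x powr (1 - t) * f y powr t \<le> f ((1 - t) *\<^sub>R x + t *\<^sub>R y))"

definition is_density :: "(real^'n \<Rightarrow> real) \<Rightarrow> bool" where
  "is_density f \<longleftrightarrow> (\<forall>x. 0 \<le> f x) \<and> (f has_integral 1) UNIV"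

definition F_d :: "(real^'n \<Rightarrow> real) set" where
  "F_d = {f. is_density f \<and> log_concave f \<and> usc_on_UNIV f}"

definition mean_vec :: "(real^'n \<Rightarrow> real) \<Rightarrow> real^'n" where
  "mean_vec f = (\<chi> i. integral UNIV (\<lambda>x. x $ i * f x))"

definition cov :: "(real^'n \<Rightarrow> real) \<Rightarrow> real^'n^'n" where
  "cov f = (\<chi> i j. integral UNIV
      (\<lambda>x. (x $ i - mean_vec f $ i) * (x $ j - mean_vec f $ j) * f x))"

definition normS :: "real^'n^'n \<Rightarrow> real^'n \<Rightarrow> real" where
  "normS S x = sqrt (x \<bullet> (matrix_inv S *v x))"

definition normS' :: "real^'n^'n \<Rightarrow> real^'n \<Rightarrow> real" where
  "normS' S w = sqrt (w \<bullet> (matrix_inv S *v w)) / sqrt (det S)"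

text \<open>Gradient of f at x (meaningful when f is differentiable at x).\<close>
definition grad :: "(real^'n \<Rightarrow> real) \<Rightarrow> real^'n \<Rightarrow> real^'n" where
  "grad f x = (\<chi> i. frechet_derivative f (at x) (axis i 1))"

definition F_class :: "real \<Rightarrow> real \<Rightarrow> real \<Rightarrow> (real^'n \<Rightarrow> real) set" where
  "F_class \<beta> \<Lambda> \<tau> = {f. f \<in> F_d \<and> continuous_on UNIV f \<and>
     (\<forall>x y. f y < f x \<and> f x < \<tau> / sqrt (det (cov f)) \<longrightarrow>
        normS (cov f) (x - y) \<ge>
          (f x - f y) * sqrt (det (cov f)) /
          (\<Lambda> * (f x * sqrt (det (cov f))) powr (1 - 1 / \<beta>)))}"

end

theory Submission
  imports Defs
begin


lemma matrix_inv_both: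
  fixes A :: "real^'n^'n"
  assumes "invertible A"
  shows "A ** matrix_inv A = mat 1" "matrix_inv A ** A = mat 1"
proof -
  have "\<exists>A'. A ** A' = mat 1 \<and> A' ** A = mat 1" using assms by (simp add: invertible_def)
  then have "A ** matrix_inv A = mat 1 \<and> matrix_inv A ** A = mat 1"
    unfolding matrix_inv_def by (rule someI_ex)
  then show "A ** matrix_inv A = mat 1" "matrix_inv A ** A = mat 1" by auto
qed

lemma matrix_inv_inv:
  fixes A :: "real^'n^'n"
  assumes "invertible A"
  shows "matrix_inv (matrix_inv A) = A"
proof -
  have i: "invertible (matrix_inv A)" using matrix_inv_both[OF assms] unfolding invertible_def by blast
  have "matrix_inv (matrix_inv A) = matrix_inv (matrix_inv A) ** (matrix_inv A ** A)"
    using matrix_inv_both[OF assms] by (simp add: matrix_mul_rid)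
  also have "\<dots> = (matrix_inv (matrix_inv A) ** matrix_inv A) ** A" by (simp add: matrix_mul_assoc)
  also have "\<dots> = A" using matrix_inv_both[OF i] by (simp add: matrix_mul_lid)
  finally show ?thesis .
qed

lemma det_matrix_inv:
  fixes A :: "real^'n^'n"
  assumes "invertible A"
  shows "det (matrix_inv A) = 1 / det A"
proof -
  have "det A * det (matrix_inv A) = 1" using matrix_inv_both(1)[OF assms]
    by (metis det_I det_mul)
  moreover have "det A \<noteq> 0" using assms invertible_det_nz by blast
  ultimately show ?thesis by (simp add: field_simps)
qed

lemma sym_inner:
  fixes A :: "real^'n^'n"
  assumes "\<And>i j. A $ i $ j = A $ j $ i"
  shows "x \<bullet> (A *v y) = y \<bullet> (A *v x)"
proof -
  have "x \<bullet> (A *v y) = (\<Sum>i\<in>UNIV. \<Sum>j\<in>UNIV. x $ i * A $ i $ j * y $ j)"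
    by (simp add: inner_vec_def matrix_vector_mult_def sum_distrib_left mult.assoc)
  also have "\<dots> = (\<Sum>j\<in>UNIV. \<Sum>i\<in>UNIV. x $ i * A $ i $ j * y $ j)" by (rule sum.swap)
  also have "\<dots> = y \<bullet> (A *v x)"
    by (simp add: inner_vec_def matrix_vector_mult_def sum_distrib_left assms mult.commute mult.left_commute)
  finally show ?thesis .
qed

lemma quad_disc:
  fixes a b c :: real
  assumes "\<And>t. 0 \<le> a * t^2 + 2 * b * t + c" "0 \<le> a"
  shows "b^2 \<le> a * c"
proof (cases "a = 0")
  case True
  show ?thesis
  proof (cases "b = 0")
    case False
    have "0 \<le> a * (-(c+1)/(2*b))^2 + 2 * b * (-(c+1)/(2*b)) + c" by (rule assms(1))
    then show ?thesis using True False by (simp add: field_simps)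
  qed (use True assms(1)[of 0] in simp)
next
  case False
  then have a: "a > 0" using assms(2) by simp
  have "0 \<le> a * (-b/a)^2 + 2 * b * (-b/a) + c" by (rule assms(1))
  then have "0 \<le> (c * a - b^2) / a" using a by (simp add: field_simps power2_eq_square)
  then show ?thesis using a by (simp add: zero_le_divide_iff algebra_simps)
qed

lemma psd_cs:
  fixes A :: "real^'n^'n"
  assumes sym: "\<And>i j. A $ i $ j = A $ j $ i" and psd: "\<And>v. 0 \<le> v \<bullet> (A *v v)"
  shows "(g \<bullet> (A *v u))^2 \<le> (g \<bullet> (A *v g)) * (u \<bullet> (A *v u))"
proof -
  have "(g \<bullet> (A *v u))^2 \<le> (u \<bullet> (A *v u)) * (g \<bullet> (A *v g))"
  proof (rule quad_disc)
    fix t :: real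
    have "0 \<le> (g + t *\<^sub>R u) \<bullet> (A *v (g + t *\<^sub>R u))" by (rule psd)
    also have "\<dots> = (u \<bullet> (A *v u)) * t^2 + 2 * (g \<bullet> (A *v u)) * t + g \<bullet> (A *v g)"
      using sym_inner[OF sym, of u g]
      by (simp add: matrix_vector_right_distrib inner_add_left inner_add_right
            matrix_vector_mult_scaleR power2_eq_square algebra_simps)
    finally show "0 \<le> (u \<bullet> (A *v u)) * t^2 + 2 * (g \<bullet> (A *v u)) * t + g \<bullet> (A *v g)" .
  qed (rule psd)
  then show ?thesis by (simp add: mult.commute)
qed

lemma cs_inv:
  fixes S :: "real^'n^'n"
  assumes sym: "\<And>i j. S $ i $ j = S $ j $ i" and psd: "\<And>v. 0 \<le> v \<bullet> (S *v v)"
    and inv: "invertible S"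
  shows "\<bar>g \<bullet> w\<bar> \<le> sqrt (g \<bullet> (S *v g)) * sqrt (w \<bullet> (matrix_inv S *v w))"
proof -
  define u where "u = matrix_inv S *v w"
  have Su: "S *v u = w" unfolding u_def
    by (simp add: matrix_vector_mul_assoc matrix_inv_both[OF inv])
  have "(g \<bullet> w)^2 \<le> (g \<bullet> (S *v g)) * (u \<bullet> (S *v u))"
    using psd_cs[OF sym psd, of g u] Su by simp
  also have "u \<bullet> (S *v u) = w \<bullet> (matrix_inv S *v w)" using Su u_def by (simp add: inner_commute)
  finally have "(g \<bullet> w)^2 \<le> (g \<bullet> (S *v g)) * (w \<bullet> (matrix_inv S *v w))" .
  then have "sqrt ((g \<bullet> w)^2) \<le> sqrt ((g \<bullet> (S *v g)) * (w \<bullet> (matrix_inv S *v w)))"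
    by (rule real_sqrt_le_mono)
  then show ?thesis by (simp add: real_sqrt_mult)
qed

lemma line_deriv:
  fixes f :: "'a::real_normed_vector \<Rightarrow> real"
  assumes "(f has_derivative f') (at (y + s *\<^sub>R w))"
  shows "((\<lambda>s. f (y + s *\<^sub>R w)) has_real_derivative f' w) (at s)"
proof -
  have l: "linear f'" using assms has_derivative_linear by blast
  have d: "((\<lambda>s. y + s *\<^sub>R w) has_derivative (\<lambda>h. h *\<^sub>R w)) (at s)"
    by (auto intro!: derivative_eq_intros)
  have "((\<lambda>s. f (y + s *\<^sub>R w)) has_derivative (\<lambda>h. f' (h *\<^sub>R w))) (at s)"
    using has_derivative_compose[OF d assms] by simp
  moreover have "(\<lambda>h. f' (h *\<^sub>R w)) = (\<lambda>h. f' w * h)"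
    using linear.scaleR[OF l] by (auto simp: mult.commute)
  ultimately show ?thesis by (simp add: has_field_derivative_def)
qed

lemma grad_inner:
  fixes f :: "real^'n \<Rightarrow> real"
  assumes "f differentiable (at x)"
  shows "frechet_derivative f (at x) w = grad f x \<bullet> w"
proof -
  let ?D = "frechet_derivative f (at x)"
  have l: "linear ?D" using assms frechet_derivative_works has_derivative_linear by blast
  have "?D w = ?D (\<Sum>i\<in>UNIV. w $ i *\<^sub>R axis i 1)"
    using basis_expansion[of w] by (simp add: scalar_mult_eq_scaleR)
  also have "\<dots> = (\<Sum>i\<in>UNIV. w $ i * ?D (axis i 1))"
    by (simp add: linear_sum[OF l] linear.scaleR[OF l])
  also have "\<dots> = grad f x \<bullet> w"
    by (simp add: grad_def inner_vec_def mult.commute)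
  finally show ?thesis .
qed

lemma cov_sym: "cov f $ i $ j = cov f $ j $ i"
  unfolding cov_def by (simp add: mult.commute mult.left_commute)



lemma ball_measure_leb:
  fixes c :: "'a::euclidean_space"
  assumes "r \<ge> 0"
  shows "measure lebesgue (ball c r) = measure lborel (ball (0::'a) r)"
proof -
  have "measure lebesgue (ball c r) = measure lborel (ball c r)"
    by (rule measure_completion) simp
  also have "\<dots> = measure lborel (ball (0::'a) r)"
    using content_ball_conv_unit_ball[OF assms, of c] content_ball_conv_unit_ball[OF assms, of "0::'a"] by simp
  finally show ?thesis .
qed

lemma markov_balls:
  fixes f :: "'a::euclidean_space \<Rightarrow> real" and c :: "nat \<Rightarrow> 'a"
  assumes int: "(f has_integral 1) UNIV" and nn: "\<And>x. 0 \<le> f x" and r: "r > 0"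
    and sub: "\<And>k x. k < N \<Longrightarrow> x \<in> ball (c k) r \<Longrightarrow> t \<le> f x"
    and disj: "\<And>k j. k < N \<Longrightarrow> j < N \<Longrightarrow> k \<noteq> j \<Longrightarrow> 2 * r \<le> dist (c k) (c j)"
  shows "real N * t * measure lborel (ball (0::'a) r) \<le> 1"
proof -
  define h where "h x = (\<Sum>k\<in>{..<N}. t * indicator (ball (c k) r) x)" for x
  have hi: "(h has_integral (\<Sum>k\<in>{..<N}. t * measure lborel (ball (0::'a) r))) UNIV"
    unfolding h_def
  proof (rule has_integral_sum)
    fix k assume "k \<in> {..<N}"
    have "integrable lebesgue (indicator (ball (c k) r) :: 'a \<Rightarrow> real)"
      using lmeasurable_iff_integrable lmeasurable_ball by blast
    then have "(indicator (ball (c k) r) has_integral measure lebesgue (ball (c k) r)) UNIV"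
      using lmeasure_integral_UNIV[OF lmeasurable_ball] integrable_on_lebesgue
      by (metis integrable_integral)
    then have "(indicator (ball (c k) r) has_integral measure lborel (ball (0::'a) r)) UNIV"
      using ball_measure_leb[of r "c k"] r by simp
    then show "((\<lambda>x. t * indicator (ball (c k) r) x) has_integral t * measure lborel (ball (0::'a) r)) UNIV"
      by (rule has_integral_mult_right)
  qed simp
  have hle: "h x \<le> f x" for x
  proof (cases "\<exists>k<N. x \<in> ball (c k) r")
    case True
    then obtain k where k: "k < N" "x \<in> ball (c k) r" by blast
    have "h x = (\<Sum>j\<in>{..<N}. if j = k then t else 0)"
      unfolding h_def
    proof (rule sum.cong)
      fix j assume j: "j \<in> {..<N}"
      show "t * indicator (ball (c j) r) x = (if j = k then t else 0)"
      proof (cases "j = k")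
        case False
        have "x \<notin> ball (c j) r"
        proof
          assume "x \<in> ball (c j) r"
          then have "dist (c k) (c j) < 2 * r" using k(2) dist_triangle_less_add[of "c k" x r "c j" r]
            by (simp add: dist_commute)
          then show False using disj[OF k(1) _ ] j False by force
        qed
        then show ?thesis using False by simp
      qed (use k in simp)
    qed simp
    also have "\<dots> = t" using k by simp
    finally show ?thesis using sub k by simp
  next
    case False
    then have "h x = 0" unfolding h_def by (auto intro!: sum.neutral)
    then show ?thesis using nn by simp
  qed
  have "(\<Sum>k\<in>{..<N}. t * measure lborel (ball (0::'a) r)) \<le> 1"
    by (rule has_integral_le[OF hi int]) (use hle in simp)
  then show ?thesis by simp
qed

lemma superlevel_bounded:
  fixes f :: "'a::euclidean_space \<Rightarrow> real"
  assumes int: "(f has_integral 1) UNIV" and nn: "\<And>x. 0 \<le> f x"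
    and lc: "\<And>x y s. 0 < s \<Longrightarrow> s < 1 \<Longrightarrow> f x powr (1 - s) * f y powr s \<le> f ((1 - s) *\<^sub>R x + s *\<^sub>R y)"
    and d: "\<delta> > 0" and t: "t > 0" and near: "\<And>w. dist w z < \<delta> \<Longrightarrow> t < f w"
  shows "\<exists>R. \<forall>x. t \<le> f x \<longrightarrow> norm (x - z) \<le> R"
proof -
  have conv: "t \<le> f ((1 - s) *\<^sub>R x + s *\<^sub>R w)"
    if x: "t \<le> f x" and w: "dist w z < \<delta>" and s: "0 < s" "s \<le> 1" for x w s
  proof (cases "s = 1")
    case True
    then show ?thesis using near[OF w] by simp
  next
    case False
    then have s1: "s < 1" using s by simp
    have "t = t powr (1 - s) * t powr s" using t by (simp add: powr_add[symmetric])
    also have "\<dots> \<le> f x powr (1 - s) * f w powr s"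
      using x near[OF w] t s1 s by (intro mult_mono powr_mono2) auto
    also have "\<dots> \<le> f ((1 - s) *\<^sub>R x + s *\<^sub>R w)" by (rule lc[OF s(1) s1])
    finally show ?thesis .
  qed
  define V where "V = measure lborel (ball (0::'a) (\<delta>/2))"
  have Vpos: "V > 0" unfolding V_def using content_ball_pos[of "\<delta>/2" "0::'a"] d by simp
  define N where "N = nat \<lceil>2 / (t * V)\<rceil>"
  have "2 / (t * V) \<le> real N" unfolding N_def by linarith
  then have NtV: "2 \<le> real N * t * V" using t Vpos by (simp add: divide_le_eq mult.commute mult.left_commute)
  show ?thesis
  proof (rule exI[of _ "2 * real N * \<delta>"], intro allI impI, rule ccontr)
    fix x assume x: "t \<le> f x" and far: "\<not> norm (x - z) \<le> 2 * real N * \<delta>"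
    define D where "D = norm (x - z)"
    have DR: "2 * real N * \<delta> < D" using far unfolding D_def by simp
    have Dpos: "D > 0" using DR d by (smt (verit) mult_nonneg_nonneg of_nat_0_le_iff)
    define c where "c k = z + (real k * \<delta> / D) *\<^sub>R (x - z)" for k :: nat
    have "real N * t * measure lborel (ball (0::'a) (\<delta>/2)) \<le> 1"
    proof (rule markov_balls[OF int nn, of "\<delta>/2" N c t])
      show "0 < \<delta> / 2" using d by simp
    next
      fix k p assume k: "k < N" and p: "p \<in> ball (c k) (\<delta>/2)"
      define lam where "lam = 1 - real k * \<delta> / D"
      have "real k * \<delta> \<le> real N * \<delta>" using k d by (intro mult_right_mono) auto
      then have "real k * \<delta> / D < 1/2" using DR Dpos by (simp add: divide_less_eq)
      then have lam: "1/2 < lam" "lam \<le> 1" unfolding lam_def using d Dpos k by auto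
      define w where "w = z + (1 / lam) *\<^sub>R (p - c k)"
      have "dist w z = norm (p - c k) / lam" unfolding w_def dist_norm using lam by simp
      also have "\<dots> < (\<delta>/2) / lam" using p lam by (intro divide_strict_right_mono) (auto simp: dist_norm norm_minus_commute)
      also have "\<dots> \<le> \<delta>" using lam d by (simp add: divide_le_eq)
      finally have wz: "dist w z < \<delta>" .
      have ck: "c k = z + (1 - lam) *\<^sub>R (x - z)" unfolding c_def lam_def by simp
      have "lam *\<^sub>R w = lam *\<^sub>R z + (p - c k)" unfolding w_def using lam
        by (simp add: scaleR_add_right)
      then have "(1 - lam) *\<^sub>R x + lam *\<^sub>R w = p" unfolding ck
        by (simp add: algebra_simps)
      then show "t \<le> f p" using conv[OF x wz, of lam] lam by simp
    next
      fix k j assume "k < N" "j < N" "k \<noteq> j"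
      have "dist (c k) (c j) = \<bar>real k * \<delta> / D - real j * \<delta> / D\<bar> * D"
        unfolding c_def dist_norm D_def
        by (simp add: scaleR_left_diff_distrib[symmetric])
      also have "\<dots> = \<bar>real k - real j\<bar> * \<delta>" using Dpos d
        by (simp add: diff_divide_distrib[symmetric] left_diff_distrib[symmetric] abs_mult)
      also have "\<dots> \<ge> 1 * \<delta>" using \<open>k \<noteq> j\<close> d by (intro mult_right_mono) auto
      finally show "2 * (\<delta> / 2) \<le> dist (c k) (c j)" by simp
    qed
    then show False using NtV unfolding V_def by simp
  qed
qed

lemma lc_tail:
  fixes f :: "'a::euclidean_space \<Rightarrow> real"
  assumes int: "(f has_integral 1) UNIV" and nn: "\<And>x. 0 \<le> f x"
    and cont: "continuous_on UNIV f"
    and lc: "\<And>x y s. 0 < s \<Longrightarrow> s < 1 \<Longrightarrow> f x powr (1 - s) * f y powr s \<le> f ((1 - s) *\<^sub>R x + s *\<^sub>R y)"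
  shows "\<exists>z B c. 0 < f z \<and> 0 < c \<and> (\<forall>x. f x \<le> B * exp (- c * norm x))"
proof -
  obtain z where z: "0 < f z"
  proof (rule ccontr)
    assume "\<not> thesis"
    then have "\<And>x. f x = 0" using nn that by (meson linorder_neqE_linordered_idom not_le)
    then have "f = (\<lambda>x. 0)" by auto
    then show False using int has_integral_0_eq[of 1 UNIV] by simp
  qed
  define M where "M = f z"
  define t where "t = M / 2"
  have Mpos: "M > 0" and tpos: "t > 0" using z unfolding M_def t_def by auto
  have "isCont f z" using cont by (simp add: continuous_on_eq_continuous_at)
  then obtain \<delta> where d: "\<delta> > 0" and dd: "\<And>w. dist w z < \<delta> \<Longrightarrow> dist (f w) (f z) < t"
    using tpos unfolding continuous_at_eps_delta by blast
  have near: "t < f w" if "dist w z < \<delta>" for w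
    using dd[OF that] unfolding t_def M_def dist_real_def by linarith
  obtain R where R: "\<And>x. t \<le> f x \<Longrightarrow> norm (x - z) \<le> R"
    using superlevel_bounded[OF int nn lc d tpos near] by blast
  define \<rho> where "\<rho> = max R 0 + 1"
  have rho: "\<rho> > 0" "R < \<rho>" unfolding \<rho>_def by auto
  define c where "c = ln 2 / \<rho>"
  have cpos: "c > 0" unfolding c_def using rho by simp
  have far: "f x \<le> M * exp (- c * norm (x - z))" if xf: "\<rho> < norm (x - z)" for x
  proof -
    define D where "D = norm (x - z)"
    have Dpos: "D > 0" using xf rho unfolding D_def by linarith
    define s where "s = \<rho> / D"
    have s: "0 < s" "s < 1" unfolding s_def using rho Dpos xf D_def by (auto simp: divide_less_eq)
    define w where "w = (1 - s) *\<^sub>R z + s *\<^sub>R x"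
    have "w - z = s *\<^sub>R (x - z)" unfolding w_def by (simp add: algebra_simps)
    then have "norm (w - z) = \<rho>" using s Dpos rho unfolding s_def D_def by simp
    then have "f w < t" using R[of w] rho by force
    moreover have "M powr (1 - s) * f x powr s \<le> f w" unfolding M_def w_def by (rule lc[OF s])
    ultimately have lt: "M powr (1 - s) * f x powr s < M / 2" unfolding t_def by simp
    have rhs: "M * exp (- c * D) = M / 2 powr (1 / s)"
      unfolding c_def s_def powr_def using Dpos rho by (simp add: exp_minus field_simps)
    show ?thesis
    proof (cases "f x = 0")
      case True
      then show ?thesis using Mpos by simp
    next
      case False
      then have fxpos: "f x > 0" using nn[of x] by simp
      have Meq: "M = M powr (1 - s) * M powr s" using Mpos by (simp add: powr_add[symmetric])
      have "f x powr s < (M powr s) / 2"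
      proof -
        have "M powr (1 - s) * f x powr s < M powr (1 - s) * (M powr s / 2)"
          using lt Meq by (simp add: mult.assoc)
        then show ?thesis using Mpos by simp
      qed
      then have "(f x powr s) powr (1 / s) < (M powr s / 2) powr (1 / s)"
        using s fxpos by (intro powr_less_mono2) auto
      also have "(M powr s / 2) powr (1 / s) = M / 2 powr (1 / s)"
        using s Mpos by (simp add: powr_divide powr_powr)
      finally show ?thesis using s fxpos rhs unfolding D_def by (simp add: powr_powr)
    qed
  qed
  obtain xm where xm: "\<And>y. y \<in> cball z \<rho> \<Longrightarrow> f y \<le> f xm"
    using continuous_attains_sup[of "cball z \<rho>" f] compact_cball cont rho(1)
      continuous_on_subset by (metis cball_eq_empty not_less order_less_imp_le subset_UNIV)
  define K where "K = max M (f xm)"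
  define B where "B = K * exp (c * (\<rho> + norm z))"
  have "\<forall>x. f x \<le> B * exp (- c * norm x)"
  proof
    fix x :: 'a
    have eq: "B * exp (- c * norm x) = K * exp (c * (\<rho> + norm z - norm x))"
      unfolding B_def by (simp add: exp_add[symmetric] algebra_simps)
    show "f x \<le> B * exp (- c * norm x)"
    proof (cases "\<rho> < norm (x - z)")
      case True
      have "f x \<le> M * exp (- c * norm (x - z))" by (rule far[OF True])
      also have "\<dots> \<le> K * exp (c * (\<rho> + norm z - norm x))"
      proof (intro mult_mono)
        show "M \<le> K" unfolding K_def by simp
        have "norm x - norm z \<le> norm (x - z)" by (rule norm_triangle_ineq2)
        then have "c * (norm x - norm z) \<le> c * norm (x - z)" using cpos by (intro mult_left_mono) auto
        moreover have "0 \<le> c * \<rho>" using cpos rho by simp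
        ultimately have "- c * norm (x - z) \<le> c * (\<rho> + norm z - norm x)"
          by (simp add: algebra_simps)
        then show "exp (- c * norm (x - z)) \<le> exp (c * (\<rho> + norm z - norm x))" by simp
        show "0 \<le> K" unfolding K_def using Mpos by simp
      qed simp
      finally show ?thesis using eq by simp
    next
      case False
      then have "x \<in> cball z \<rho>" by (simp add: dist_norm norm_minus_commute)
      then have "f x \<le> K" using xm unfolding K_def by force
      also have "\<dots> \<le> K * exp (c * (\<rho> + norm z - norm x))"
      proof -
        have "norm x \<le> norm z + norm (x - z)" using norm_triangle_ineq[of z "x - z"] by simp
        then have "0 \<le> c * (\<rho> + norm z - norm x)" using False cpos by simp
        then have "1 \<le> exp (c * (\<rho> + norm z - norm x))" by simp
        moreover have "0 \<le> K" unfolding K_def using Mpos by simp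
        ultimately show ?thesis by (metis mult.right_neutral mult_left_mono)
      qed
      finally show ?thesis using eq by simp
    qed
  qed
  then show ?thesis using z cpos by blast
qed

lemma poly_exp_bound:
  fixes a r :: real
  assumes a: "a > 0" and r: "r \<ge> 0"
  shows "(1 + r^2) * exp (- a * r) \<le> max 1 (2 / a^2)"
proof -
  define K where "K = max 1 (2 / a^2)"
  have "1 + a * r + (a * r)^2 / 2 \<le> exp (a * r)" using a r by (intro exp_lower_Taylor_quadratic) simp
  moreover have "0 \<le> a * r" using a r by simp
  ultimately have e: "1 + a^2 * r^2 / 2 \<le> exp (a * r)" by (simp add: power_mult_distrib)
  have "r^2 \<le> K * (a^2 * r^2 / 2)"
  proof -
    have "2 / a^2 \<le> K" unfolding K_def by simp
    then have "2 / a^2 * (a^2 * r^2 / 2) \<le> K * (a^2 * r^2 / 2)" by (intro mult_right_mono) auto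
    then show ?thesis using a by simp
  qed
  moreover have "1 \<le> K" unfolding K_def by simp
  ultimately have "1 + r^2 \<le> K * (1 + a^2 * r^2 / 2)" by (simp add: algebra_simps)
  also have "\<dots> \<le> K * exp (a * r)" using e \<open>1 \<le> K\<close> by (intro mult_left_mono) auto
  finally have "(1 + r^2) * exp (- a * r) \<le> K * exp (a * r) * exp (- a * r)"
    by (intro mult_right_mono) auto
  also have "\<dots> = K" by (simp add: mult.assoc exp_add[symmetric])
  finally show ?thesis unfolding K_def .
qed

lemma sqrt_exp: "sqrt (exp y) = exp (y / 2)"
proof -
  have "exp y = (exp (y / 2))^2" by (simp add: power2_eq_square exp_add[symmetric])
  then show ?thesis by simp
qed

lemma lc_moment:
  fixes f :: "'a::euclidean_space \<Rightarrow> real"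
  assumes int: "(f has_integral 1) UNIV" and nn: "\<And>x. 0 \<le> f x"
    and cont: "continuous_on UNIV f"
    and lc: "\<And>x y s. 0 < s \<Longrightarrow> s < 1 \<Longrightarrow> f x powr (1 - s) * f y powr s \<le> f ((1 - s) *\<^sub>R x + s *\<^sub>R y)"
  shows "integrable lborel (\<lambda>x. (1 + norm x ^ 2) * f x)"
proof -
  obtain z B c where z: "0 < f z" and c: "0 < c" and tail: "\<And>x. f x \<le> B * exp (- c * norm x)"
    using lc_tail[OF int nn cont lc] by blast
  define M where "M = f z"
  have Mpos: "M > 0" using z M_def by simp
  have B0: "0 \<le> B"
  proof (rule ccontr)
    assume "\<not> 0 \<le> B"
    then have "B * exp (- c * norm z) < 0" by (simp add: mult_neg_pos)
    then show False using tail[of z] z by simp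
  qed
  define g where "g y = f ((1/2) *\<^sub>R y + (1/2) *\<^sub>R z)" for y
  have gcont: "continuous_on UNIV g" unfolding g_def
    by (intro continuous_on_compose2[OF cont] continuous_intros) auto
  have fmeas: "f \<in> borel_measurable borel" by (rule borel_measurable_continuous_onI[OF cont])
  have gmeas: "g \<in> borel_measurable borel" by (rule borel_measurable_continuous_onI[OF gcont])
  have gnn: "0 \<le> g y" for y unfolding g_def by (rule nn)
  have half: "sqrt (f x) * sqrt M \<le> g x" for x
  proof -
    have "f x powr (1 - 1/2) * f z powr (1/2) \<le> f ((1 - 1/2) *\<^sub>R x + (1/2) *\<^sub>R z)"
      by (rule lc) auto
    then show ?thesis unfolding g_def M_def using nn[of x] nn[of z]
      by (simp add: powr_half_sqrt)
  qed
  define a where "a = c / 2"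
  have apos: "a > 0" unfolding a_def using c by simp
  define K0 where "K0 = max 1 (2 / a^2)"
  define C where "C = K0 * sqrt B / sqrt M"
  have bound: "(1 + norm x ^ 2) * f x \<le> C * g x" for x
  proof -
    have sf: "sqrt (f x) \<le> sqrt B * exp (- a * norm x)"
    proof -
      have "sqrt (f x) \<le> sqrt (B * exp (- c * norm x))" using tail[of x] by simp
      also have "\<dots> = sqrt B * exp (- a * norm x)" unfolding a_def
        by (simp add: real_sqrt_mult sqrt_exp)
      finally show ?thesis .
    qed
    have "(1 + norm x ^ 2) * f x = (1 + norm x ^ 2) * sqrt (f x) * sqrt (f x)"
      using nn[of x] by (simp add: mult.assoc)
    also have "\<dots> \<le> (1 + norm x ^ 2) * (sqrt B * exp (- a * norm x)) * (g x / sqrt M)"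
    proof (intro mult_mono)
      show "sqrt (f x) \<le> g x / sqrt M" using half[of x] Mpos by (simp add: le_divide_eq)
    qed (use sf gnn Mpos B0 nn[of x] in auto)
    also have "\<dots> = ((1 + norm x ^ 2) * exp (- a * norm x)) * sqrt B / sqrt M * g x" by simp
    also have "\<dots> \<le> K0 * sqrt B / sqrt M * g x"
      unfolding K0_def using poly_exp_bound[OF apos, of "norm x"] B0 Mpos gnn
      by (intro mult_right_mono divide_right_mono) auto
    finally show ?thesis unfolding C_def .
  qed
  have eqm: "lborel = density (distr lborel borel (\<lambda>x. - z + 2 *\<^sub>R x)) (\<lambda>_. \<bar>2::real\<bar> ^ DIM('a))"
    by (rule lborel_affine) simp
  have gT: "g (- z + 2 *\<^sub>R x) = f x" for x unfolding g_def by (simp add: algebra_simps)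
  have "(\<integral>\<^sup>+ y. ennreal (g y) \<partial>lborel)
      = (\<integral>\<^sup>+ y. ennreal (g y) \<partial>density (distr lborel borel (\<lambda>x. - z + 2 *\<^sub>R x)) (\<lambda>_. \<bar>2::real\<bar> ^ DIM('a)))"
    using eqm by simp
  also have "\<dots> = (\<integral>\<^sup>+ y. ennreal (\<bar>2::real\<bar> ^ DIM('a)) * ennreal (g y) \<partial>distr lborel borel (\<lambda>x. - z + 2 *\<^sub>R x))"
    using gmeas by (subst nn_integral_density) auto
  also have "\<dots> = (\<integral>\<^sup>+ x. ennreal (\<bar>2::real\<bar> ^ DIM('a)) * ennreal (g (- z + 2 *\<^sub>R x)) \<partial>lborel)"
    using gmeas by (subst nn_integral_distr) auto
  also have "\<dots> = ennreal (\<bar>2::real\<bar> ^ DIM('a)) * (\<integral>\<^sup>+ x. ennreal (f x) \<partial>lborel)"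
    unfolding gT using fmeas by (subst nn_integral_cmult) auto
  also have "\<dots> = ennreal (\<bar>2::real\<bar> ^ DIM('a))"
    using nn_integral_has_integral_lborel[OF fmeas nn int] by simp
  finally have gfin: "(\<integral>\<^sup>+ y. ennreal (g y) \<partial>lborel) < \<infinity>" by simp
  have gint: "integrable lborel g"
    by (rule integrableI_nonneg) (use gmeas gnn gfin in auto)
  then have Cg: "integrable lborel (\<lambda>x. C * g x)" by simp
  show ?thesis
  proof (rule Bochner_Integration.integrable_bound[OF Cg])
    show "(\<lambda>x. (1 + norm x ^ 2) * f x) \<in> borel_measurable lborel" using fmeas by measurable
    show "AE x in lborel. norm ((1 + norm x ^ 2) * f x) \<le> norm (C * g x)"
    proof (rule AE_I2)
      fix x
      have "0 \<le> (1 + norm x ^ 2) * f x" using nn[of x] by simp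
      then show "norm ((1 + norm x ^ 2) * f x) \<le> norm (C * g x)" using bound[of x] by simp
    qed
  qed
qed



lemma cov_integrable:
  fixes f :: "real^'n \<Rightarrow> real"
  assumes "f \<in> F_d" "continuous_on UNIV f"
  shows "(\<lambda>x. (x $ i - m $ i) * (x $ j - m $ j) * f x) integrable_on UNIV"
proof -
  have nn: "\<And>x. 0 \<le> f x" and int: "(f has_integral 1) UNIV"
    using assms(1) by (auto simp: F_d_def is_density_def)
  have lc: "\<And>x y s. 0 < s \<Longrightarrow> s < 1 \<Longrightarrow> f x powr (1 - s) * f y powr s \<le> f ((1 - s) *\<^sub>R x + s *\<^sub>R y)"
    using assms(1) by (auto simp: F_d_def log_concave_def)
  have G: "integrable lborel (\<lambda>x. (1 + norm x ^ 2) * f x)"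
    by (rule lc_moment[OF int nn assms(2) lc])
  define A where "A = \<bar>m $ i\<bar> + \<bar>m $ j\<bar>"
  define K where "K = 2 + 2 * A^2"
  have KG: "integrable lborel (\<lambda>x. K * ((1 + norm x ^ 2) * f x))" using G by simp
  have fmeas: "f \<in> borel_measurable borel" by (rule borel_measurable_continuous_onI[OF assms(2)])
  have "integrable lborel (\<lambda>x. (x $ i - m $ i) * (x $ j - m $ j) * f x)"
  proof (rule Bochner_Integration.integrable_bound[OF KG])
    show "(\<lambda>x. (x $ i - m $ i) * (x $ j - m $ j) * f x) \<in> borel_measurable lborel"
      using fmeas by measurable
    show "AE x in lborel. norm ((x $ i - m $ i) * (x $ j - m $ j) * f x) \<le> norm (K * ((1 + norm x ^ 2) * f x))"
    proof (rule AE_I2)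
      fix x :: "real^'n"
      have A0: "0 \<le> A" unfolding A_def by simp
      have bi: "\<bar>x $ i - m $ i\<bar> \<le> norm x + A"
        using component_le_norm_cart[of x i] unfolding A_def by linarith
      have bj: "\<bar>x $ j - m $ j\<bar> \<le> norm x + A"
        using component_le_norm_cart[of x j] unfolding A_def by linarith
      have "\<bar>(x $ i - m $ i) * (x $ j - m $ j)\<bar> \<le> (norm x + A) * (norm x + A)"
        unfolding abs_mult using bi bj by (intro mult_mono) auto
      also have "\<dots> \<le> K * (1 + norm x ^ 2)"
      proof -
        have "0 \<le> (norm x - A)^2" by simp
        then have 1: "(norm x + A) * (norm x + A) \<le> 2 * norm x ^ 2 + 2 * A^2"
          by (simp add: power2_eq_square algebra_simps)
        have "0 \<le> A^2 * norm x ^ 2" by simp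
        then have "2 * norm x ^ 2 + 2 * A^2 \<le> K * (1 + norm x ^ 2)" unfolding K_def
          by (simp add: algebra_simps)
        with 1 show ?thesis by linarith
      qed
      finally have b: "\<bar>(x $ i - m $ i) * (x $ j - m $ j)\<bar> \<le> K * (1 + norm x ^ 2)" .
      have "\<bar>(x $ i - m $ i) * (x $ j - m $ j) * f x\<bar> = \<bar>(x $ i - m $ i) * (x $ j - m $ j)\<bar> * f x"
        using nn[of x] by (simp add: abs_mult)
      also have "\<dots> \<le> K * (1 + norm x ^ 2) * f x" using b nn[of x] by (rule mult_right_mono)
      finally show "norm ((x $ i - m $ i) * (x $ j - m $ j) * f x) \<le> norm (K * ((1 + norm x ^ 2) * f x))"
        using nn[of x] unfolding K_def by (simp add: mult.assoc)
    qed
  qed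
  then show ?thesis by (rule integrable_on_lborel)
qed

lemma cov_psd:
  fixes f :: "real^'n \<Rightarrow> real"
  assumes "f \<in> F_d" "continuous_on UNIV f"
  shows "0 \<le> v \<bullet> (cov f *v v)"
proof -
  define m where "m = mean_vec f"
  define h where "h i j x = (x $ i - m $ i) * (x $ j - m $ j) * f x" for i j x
  have sq_expand: "(\<Sum>i\<in>UNIV. \<Sum>j\<in>UNIV. v $ i * v $ j * h i j x) = (\<Sum>i\<in>UNIV. v $ i * (x $ i - m $ i))^2 * f x" for x
  proof -
    have "(\<Sum>i\<in>UNIV. v $ i * (x $ i - m $ i))^2 * f x
       = (\<Sum>i\<in>UNIV. \<Sum>j\<in>UNIV. (v $ i * (x $ i - m $ i)) * (v $ j * (x $ j - m $ j))) * f x"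
      by (simp only: power2_eq_square sum_product)
    also have "\<dots> = (\<Sum>i\<in>UNIV. \<Sum>j\<in>UNIV. (v $ i * (x $ i - m $ i)) * (v $ j * (x $ j - m $ j)) * f x)"
      by (simp add: sum_distrib_right)
    also have "\<dots> = (\<Sum>i\<in>UNIV. \<Sum>j\<in>UNIV. v $ i * v $ j * h i j x)"
      unfolding h_def by (intro sum.cong refl) (simp add: algebra_simps)
    finally show ?thesis by simp
  qed
  have hint: "\<And>i j. h i j integrable_on UNIV" unfolding h_def by (rule cov_integrable[OF assms])
  have hint2: "(\<lambda>x. v $ i * v $ j * h i j x) integrable_on UNIV" for i j
    using integrable_on_cmult_left[OF hint[of i j], of "v $ i * v $ j"] by (simp add: mult.assoc)
  have "v \<bullet> (cov f *v v) = (\<Sum>i\<in>UNIV. \<Sum>j\<in>UNIV. v $ i * v $ j * integral UNIV (h i j))"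
    unfolding inner_vec_def matrix_vector_mult_def cov_def h_def m_def
    by (simp add: sum_distrib_left mult.commute mult.left_commute mult.assoc)
  also have "\<dots> = (\<Sum>i\<in>UNIV. \<Sum>j\<in>UNIV. integral UNIV (\<lambda>x. v $ i * v $ j * h i j x))"
    by simp
  also have "\<dots> = (\<Sum>i\<in>UNIV. integral UNIV (\<lambda>x. \<Sum>j\<in>UNIV. v $ i * v $ j * h i j x))"
    by (intro sum.cong refl integral_sum[symmetric]) (auto intro: hint2)
  also have "\<dots> = integral UNIV (\<lambda>x. \<Sum>i\<in>UNIV. \<Sum>j\<in>UNIV. v $ i * v $ j * h i j x)"
    by (intro integral_sum[symmetric]) (auto intro!: integrable_sum hint2)
  also have "\<dots> = integral UNIV (\<lambda>x. (\<Sum>i\<in>UNIV. v $ i * (x $ i - m $ i))^2 * f x)"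
  proof (rule arg_cong[where f="integral UNIV"], rule ext)
    fix x
    show "(\<Sum>i\<in>UNIV. \<Sum>j\<in>UNIV. v $ i * v $ j * h i j x) = (\<Sum>i\<in>UNIV. v $ i * (x $ i - m $ i))^2 * f x"
      by (rule sq_expand)
  qed
  also have "\<dots> \<ge> 0"
  proof (rule integral_nonneg)
    show "(\<lambda>x. (\<Sum>i\<in>UNIV. v $ i * (x $ i - m $ i))^2 * f x) integrable_on UNIV"
    proof -
      have "(\<lambda>x. \<Sum>i\<in>UNIV. \<Sum>j\<in>UNIV. v $ i * v $ j * h i j x) integrable_on UNIV"
        by (auto intro!: integrable_sum hint2)
      moreover have "(\<lambda>x. \<Sum>i\<in>UNIV. \<Sum>j\<in>UNIV. v $ i * v $ j * h i j x) = (\<lambda>x. (\<Sum>i\<in>UNIV. v $ i * (x $ i - m $ i))^2 * f x)"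
        by (intro ext sq_expand)
      ultimately show ?thesis by simp
    qed
    show "\<And>x. x \<in> UNIV \<Longrightarrow> 0 \<le> (\<Sum>i\<in>UNIV. v $ i * (x $ i - m $ i))^2 * f x"
      using assms(1) by (auto simp: F_d_def is_density_def)
  qed
  finally show ?thesis .
qed


theorem proposition9:
  fixes f :: "real^'n \<Rightarrow> real" and \<tau>s \<beta> \<Lambda> \<tau> :: real
  assumes "\<tau>s > 0"
    and "f \<in> F_d"
    and "continuous_on UNIV f"
    and "\<forall>x. f x < \<tau>s \<longrightarrow> f differentiable (at x)"
    and "\<beta> \<ge> 1" and "\<Lambda> > 0" and "\<tau> > 0"
    and "\<tau> \<le> \<tau>s * sqrt (det (cov f))"
  shows "f \<in> F_class \<beta> \<Lambda> \<tau> \<longleftrightarrow>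
    (\<forall>x. f x < \<tau> / sqrt (det (cov f)) \<longrightarrow>
       normS' (matrix_inv (cov f)) (grad f x)
         \<le> \<Lambda> * (f x * sqrt (det (cov f))) powr (1 - 1 / \<beta>))"
proof -
  define S where "S = cov f"
  define sd where "sd = sqrt (det S)"
  define e where "e = 1 - 1 / \<beta>"
  define T where "T = \<tau> / sd"
  have e0: "0 \<le> e" using assms(5) unfolding e_def by (simp add: field_simps)
  have sdpos: "sd > 0"
  proof -
    have "0 < \<tau>s * sd" using assms(7,8) unfolding sd_def S_def by linarith
    then show ?thesis using assms(1) by (simp add: zero_less_mult_iff)
  qed
  then have detpos: "det S > 0" unfolding sd_def by simp
  then have inv: "invertible S" by (simp add: invertible_det_nz)
  have Tle: "T \<le> \<tau>s" unfolding T_def using assms(8) sdpos unfolding sd_def S_def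
    by (simp add: divide_le_eq mult.commute)
  have sym: "\<And>i j. S $ i $ j = S $ j $ i" unfolding S_def by (rule cov_sym)
  have psd: "\<And>v. 0 \<le> v \<bullet> (S *v v)" unfolding S_def by (rule cov_psd[OF assms(2,3)])
  have nonneg: "\<And>x. 0 \<le> f x" using assms(2) by (simp add: F_d_def is_density_def)
  have cont: "\<And>x. isCont f x" using assms(3) by (simp add: continuous_on_eq_continuous_at)
  have invpsd: "0 \<le> w \<bullet> (matrix_inv S *v w)" for w
  proof -
    have "S *v (matrix_inv S *v w) = w"
      by (simp add: matrix_vector_mul_assoc matrix_inv_both[OF inv])
    then show ?thesis using psd[of "matrix_inv S *v w"] by (simp add: inner_commute)
  qed
  have normS'_eq: "normS' (matrix_inv S) g = sqrt (g \<bullet> (S *v g)) * sd" for g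
    unfolding normS'_def matrix_inv_inv[OF inv] det_matrix_inv[OF inv] sd_def
    using detpos by (simp add: real_sqrt_divide)
  have diff: "\<And>x. f x < T \<Longrightarrow> f differentiable (at x)" using assms(4) Tle by auto
  have "f \<in> F_class \<beta> \<Lambda> \<tau> \<longleftrightarrow>
    (\<forall>x y. f y < f x \<and> f x < T \<longrightarrow>
        normS S (x - y) \<ge> (f x - f y) * sd / (\<Lambda> * (f x * sd) powr e))"
    unfolding F_class_def S_def sd_def T_def e_def using assms(2,3) by simp
  also have "\<dots> \<longleftrightarrow> (\<forall>x. f x < T \<longrightarrow>
       sqrt (grad f x \<bullet> (S *v grad f x)) * sd \<le> \<Lambda> * (f x * sd) powr e)"
  proof
    assume C: "\<forall>x y. f y < f x \<and> f x < T \<longrightarrow>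
        normS S (x - y) \<ge> (f x - f y) * sd / (\<Lambda> * (f x * sd) powr e)"
    show "\<forall>x. f x < T \<longrightarrow> sqrt (grad f x \<bullet> (S *v grad f x)) * sd \<le> \<Lambda> * (f x * sd) powr e"
    proof (intro allI impI)
      fix x assume fxT: "f x < T"
      define g where "g = grad f x"
      define a where "a = g \<bullet> (S *v g)"
      have a0: "0 \<le> a" unfolding a_def by (rule psd)
      show "sqrt (grad f x \<bullet> (S *v grad f x)) * sd \<le> \<Lambda> * (f x * sd) powr e"
      proof (cases "a = 0")
        case True
        then show ?thesis using assms(6) unfolding a_def g_def by simp
      next
        case False
        then have apos: "a > 0" using a0 by simp
        define v where "v = S *v g"
        define \<phi> where "\<phi> h = f (x + h *\<^sub>R (- v))" for h
        have dx: "(f has_derivative frechet_derivative f (at x)) (at (x + 0 *\<^sub>R (- v)))"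
          using frechet_derivative_works[THEN iffD1, OF diff[OF fxT]] by simp
        have "(\<phi> has_real_derivative frechet_derivative f (at x) (- v)) (at 0)"
          unfolding \<phi>_def by (rule line_deriv[OF dx])
        moreover have "frechet_derivative f (at x) (- v) = - a"
          using grad_inner[OF diff[OF fxT], of "- v"] unfolding a_def v_def g_def by simp
        ultimately have D: "(\<phi> has_real_derivative - a) (at 0)" by simp
        have "((\<lambda>h. (\<phi> h - \<phi> 0) / (h - 0)) \<longlongrightarrow> - a) (at 0)"
          using D by (simp add: has_field_derivative_iff)
        then have "((\<lambda>h. (\<phi> h - \<phi> 0) / (h - 0)) \<longlongrightarrow> - a) (at_right 0)"
          by (rule tendsto_mono[OF at_within_le_at])
        from tendsto_minus[OF this] have Q: "((\<lambda>h. (f x - \<phi> h) / h) \<longlongrightarrow> a) (at_right 0)" unfolding \<phi>_def by (simp add: minus_divide_left)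
        have ev1: "\<forall>\<^sub>F h in at_right 0. 0 < (f x - \<phi> h) / h \<and> 0 < h"
          using order_tendstoD(1)[OF Q apos] eventually_at_right_less[of "0::real"]
          by (auto elim: eventually_elim2)
        obtain h0 where h0: "0 < (f x - \<phi> h0) / h0" "0 < h0"
          using eventually_happens[OF ev1] by auto
        have fxpos: "0 < f x"
        proof -
          have "\<phi> h0 < f x" using h0 by (simp add: zero_less_divide_iff)
          then show ?thesis using nonneg[of "x + h0 *\<^sub>R (- v)"] unfolding \<phi>_def by simp
        qed
        define P where "P = (f x * sd) powr e"
        have Ppos: "P > 0" unfolding P_def using fxpos sdpos by simp
        have vinv: "matrix_inv S *v v = g" unfolding v_def
          by (simp add: matrix_vector_mul_assoc matrix_inv_both[OF inv])
        have ev2: "\<forall>\<^sub>F h in at_right 0. (f x - \<phi> h) / h \<le> sqrt a * \<Lambda> * P / sd"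
          using ev1
        proof (rule eventually_mono)
          fix h assume hh: "0 < (f x - \<phi> h) / h \<and> 0 < h"
          then have lt: "\<phi> h < f x" by (auto simp add: zero_less_divide_iff)
          have Ch: "normS S (x - (x + h *\<^sub>R (- v))) \<ge> (f x - \<phi> h) * sd / (\<Lambda> * P)"
            using C lt fxT unfolding \<phi>_def P_def by blast
          have "normS S (x - (x + h *\<^sub>R (- v))) = h * sqrt a"
          proof -
            have "(h *\<^sub>R v) \<bullet> (matrix_inv S *v (h *\<^sub>R v)) = h^2 * a"
              using vinv unfolding a_def v_def
              by (simp add: matrix_vector_mult_scaleR power2_eq_square inner_commute)
            then show ?thesis using hh unfolding normS_def
              by (simp add: real_sqrt_mult)
          qed
          with Ch have "(f x - \<phi> h) * sd / (\<Lambda> * P) \<le> h * sqrt a" by simp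
          then have "(f x - \<phi> h) * sd \<le> h * sqrt a * (\<Lambda> * P)"
            using Ppos assms(6) by (simp add: divide_le_eq)
          then have "(f x - \<phi> h) \<le> h * (sqrt a * \<Lambda> * P / sd)"
            using sdpos by (simp add: le_divide_eq algebra_simps)
          then show "(f x - \<phi> h) / h \<le> sqrt a * \<Lambda> * P / sd"
            using hh by (simp add: divide_le_eq mult.commute)
        qed
        have "a \<le> sqrt a * \<Lambda> * P / sd"
          by (rule tendsto_upperbound[OF Q ev2]) simp
        then have "sqrt a * sqrt a \<le> sqrt a * (\<Lambda> * P / sd)" using a0 by simp
        moreover have "0 < sqrt a" using apos by simp
        ultimately have "sqrt a \<le> \<Lambda> * P / sd" using mult_le_cancel_left_pos by blast
        then show ?thesis using sdpos unfolding a_def g_def P_def by (simp add: le_divide_eq)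
      qed
    qed
  next
    assume G: "\<forall>x. f x < T \<longrightarrow> sqrt (grad f x \<bullet> (S *v grad f x)) * sd \<le> \<Lambda> * (f x * sd) powr e"
    show "\<forall>x y. f y < f x \<and> f x < T \<longrightarrow>
        normS S (x - y) \<ge> (f x - f y) * sd / (\<Lambda> * (f x * sd) powr e)"
    proof (intro allI impI)
      fix x y assume xy: "f y < f x \<and> f x < T"
      define w where "w = x - y"
      define \<phi> where "\<phi> s = f (y + s *\<^sub>R w)" for s
      have \<phi>0: "\<phi> 0 = f y" and \<phi>1: "\<phi> 1 = f x" unfolding \<phi>_def w_def by simp_all
      have cphi: "continuous_on UNIV \<phi>" unfolding \<phi>_def
        by (intro continuous_on_compose2[OF assms(3)] continuous_intros) auto
      define A where "A = {0..1} \<inter> {s. (\<lambda>_. f x) s \<le> \<phi> s}"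
      have clA: "closed A" unfolding A_def
        by (intro closed_Int closed_real_atLeastAtMost closed_Collect_le cphi continuous_on_const)
      have 1: "1 \<in> A" unfolding A_def using \<phi>1 by simp
      have bA: "bdd_below A" unfolding A_def by (auto intro: bdd_belowI[of _ 0])
      define t1 where "t1 = Inf A"
      have t1A: "t1 \<in> A" unfolding t1_def using closed_contains_Inf[OF _ bA clA] 1 by blast
      have t1low: "\<And>s. s \<in> A \<Longrightarrow> t1 \<le> s" unfolding t1_def using bA by (simp add: cInf_lower)
      have t1pos: "0 < t1"
      proof -
        have "0 \<le> t1" "f x \<le> \<phi> t1" using t1A unfolding A_def by auto
        moreover have "t1 \<noteq> 0" using \<phi>0 xy calculation(2) by auto
        ultimately show ?thesis by simp
      qed
      have t1le: "t1 \<le> 1" using t1A unfolding A_def by simp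
      have below: "\<phi> s < f x" if "0 \<le> s" "s < t1" for s
      proof (rule ccontr)
        assume "\<not> \<phi> s < f x"
        then have "s \<in> A" using that t1le unfolding A_def by auto
        then show False using t1low that by fastforce
      qed
      have "\<exists>l z. 0 < z \<and> z < t1 \<and> (\<phi> has_real_derivative l) (at z) \<and> \<phi> t1 - \<phi> 0 = (t1 - 0) * l"
      proof (rule MVT[OF t1pos])
        show "continuous_on {0..t1} \<phi>" using cphi continuous_on_subset by blast
        fix s assume s: "0 < s" "s < t1"
        have "f (y + s *\<^sub>R w) < T" using below[of s] s xy unfolding \<phi>_def by simp
        then have "(f has_derivative frechet_derivative f (at (y + s *\<^sub>R w))) (at (y + s *\<^sub>R w))"
          using diff frechet_derivative_works by blast
        then show "\<phi> differentiable at s" unfolding \<phi>_def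
          using line_deriv real_differentiable_def by blast
      qed
      then obtain l \<xi> where \<xi>: "0 < \<xi>" "\<xi> < t1" "(\<phi> has_real_derivative l) (at \<xi>)"
        "\<phi> t1 - \<phi> 0 = (t1 - 0) * l" by blast
      define p where "p = y + \<xi> *\<^sub>R w"
      have fp: "f p < f x" using below[of \<xi>] \<xi> unfolding \<phi>_def p_def by simp
      have dp: "f differentiable (at p)" using diff fp xy by simp
      have "(\<phi> has_real_derivative frechet_derivative f (at p) w) (at \<xi>)"
        unfolding \<phi>_def using line_deriv dp frechet_derivative_works p_def by blast
      then have l: "l = grad f p \<bullet> w" using DERIV_unique \<xi>(3) grad_inner[OF dp] by metis
      define N where "N = normS S w"
      define P where "P = (f x * sd) powr e"
      have fxpos: "0 < f x" using xy nonneg[of y] by simp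
      have Ppos: "P > 0" unfolding P_def using fxpos sdpos by simp
      have "sqrt (grad f p \<bullet> (S *v grad f p)) * sd \<le> \<Lambda> * (f p * sd) powr e"
        using G fp xy by auto
      also have "\<dots> \<le> \<Lambda> * P" unfolding P_def
        using fp nonneg[of p] sdpos e0 assms(6)
        by (intro mult_left_mono powr_mono2) auto
      finally have gb: "sqrt (grad f p \<bullet> (S *v grad f p)) \<le> \<Lambda> * P / sd"
        using sdpos by (simp add: le_divide_eq)
      have "\<bar>l\<bar> \<le> sqrt (grad f p \<bullet> (S *v grad f p)) * N"
        unfolding l N_def normS_def by (rule cs_inv[OF sym psd inv])
      also have "\<dots> \<le> \<Lambda> * P / sd * N"
        using gb invpsd by (intro mult_right_mono) (auto simp: N_def normS_def)
      finally have lb: "\<bar>l\<bar> \<le> \<Lambda> * P / sd * N" .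
      have "f x - f y \<le> \<phi> t1 - \<phi> 0" using t1A \<phi>0 unfolding A_def by simp
      also have "\<dots> = t1 * l" using \<xi> by simp
      also have "\<dots> \<le> \<bar>l\<bar>"
      proof -
        have "t1 * l \<le> t1 * \<bar>l\<bar>" using t1pos by (intro mult_left_mono) auto
        also have "\<dots> \<le> 1 * \<bar>l\<bar>" using t1le by (intro mult_right_mono) auto
        finally show ?thesis by simp
      qed
      also have "\<dots> \<le> \<Lambda> * P / sd * N" by (rule lb)
      finally have "f x - f y \<le> \<Lambda> * P / sd * N" .
      then have "(f x - f y) * sd \<le> N * (\<Lambda> * P)" using sdpos by (simp add: field_simps)
      then show "normS S (x - y) \<ge> (f x - f y) * sd / (\<Lambda> * (f x * sd) powr e)"
        using Ppos assms(6) unfolding N_def w_def P_def by (simp add: divide_le_eq)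
    qed
  qed
  also have "\<dots> \<longleftrightarrow> (\<forall>x. f x < \<tau> / sqrt (det (cov f)) \<longrightarrow>
       normS' (matrix_inv (cov f)) (grad f x)
         \<le> \<Lambda> * (f x * sqrt (det (cov f))) powr (1 - 1 / \<beta>))"
    unfolding normS'_eq[unfolded S_def sd_def] T_def sd_def S_def e_def by simp
  finally show ?thesis .
qed

end
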